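(* Under Assumptions 1 and 2 (stated in the context), there exists a constant $L_1$ such that for all $i,j,k$, all $t_1,t_2$ and all $\theta$ in the (bounded) domain, $$|\text{dist}(b_{ij}(t_1,\theta),o_k)-\text{dist}(b_{ij}(t_2,\theta),o_k)|\le L_1|t_1-t_2|.$$
   Context: An articulated robot consists of finitely many rigid bodies. For a finite-dimensional trajectory parameter vector $\theta$ and $t\in[0,T]$, the $i$-th body occupies $b_i(t,\theta)\subset\mathbb{R}^3$; obstacles occupy $o\subset\mathbb{R}^3$. $\text{dist}(A,B)$ is the shortest Euclidean distance between sets. The constraints of interest are $\text{dist}(b_i(t,\theta),o)\ge d_0$ for all $i$ and $t\in[0,T]$. Assumption 1: there are finite decompositions $b_i(t,\theta)=\bigcup_j b_{ij}(t,\theta)$, $o=\bigcup_k o_k$ such that for every triple $(i,j,k)$ the function $(t,\theta)\mapsto\text{dist}(b_{ij}(t,\theta),o_k)$ is sufficiently smooth. Assumption 2: the feasible domain of $t$ and $\theta$ is bounded. *)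

theory Defs
  imports "HOL-Analysis.Analysis"
begin

definition C1_on :: "'a::euclidean_space set \<Rightarrow> ('a \<Rightarrow> real) \<Rightarrow> bool" where
  "C1_on S f \<longleftrightarrow>
     (\<exists>f'. (\<forall>x\<in>S. (f has_derivative blinfun_apply (f' x)) (at x)) \<and> continuous_on S f')"

end

theory Submission
  imports Defs
begin

lemma finite_bound_ex:
  assumes "finite A" "\<forall>a\<in>A. \<exists>L\<ge>0. Q a L"
    and mono: "\<And>a L L'. Q a L \<Longrightarrow> L \<le> L' \<Longrightarrow> Q a L'"
  shows "\<exists>L\<ge>0. \<forall>a\<in>A. Q a (L::real)"
  using assms(1,2)
proof (induction A rule: finite_induct)
  case empty then show ?case by auto
next
  case (insert x F)
  then obtain L where L: "L \<ge> 0" "\<forall>a\<in>F. Q a L" by auto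
  from insert obtain M where M: "M \<ge> 0" "Q x M" by auto
  show ?case
    apply (rule exI[of _ "max L M"])
    using L M mono by (metis insert_iff max.cobounded1 max.cobounded2 order_trans)
qed

lemma single_bound:
  fixes f :: "real \<times> (real^'n) \<Rightarrow> real" and \<Theta> :: "(real^'n) set"
  assumes "C1_on UNIV f" "bounded \<Theta>"
  shows "\<exists>L\<ge>0. \<forall>t1\<in>{0..T}. \<forall>t2\<in>{0..T}. \<forall>\<theta>\<in>\<Theta>.
           \<bar>f (t1, \<theta>) - f (t2, \<theta>)\<bar> \<le> L * \<bar>t1 - t2\<bar>"
proof -
  obtain f' where d: "\<And>x. (f has_derivative blinfun_apply (f' x)) (at x)" and c: "continuous_on UNIV f'"
    using assms(1) unfolding C1_on_def by blast
  obtain R where R0: "\<forall>x\<in>\<Theta>. norm x \<le> R" using assms(2) unfolding bounded_iff by blast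
  then have R: "\<Theta> \<subseteq> cball 0 R" by (auto simp: subset_eq)
  define C where "C = {0..T} \<times> cball (0::real^'n) R"
  have cc: "compact C" "convex C" unfolding C_def
    by (simp_all add: compact_Times convex_Times compact_Icc convex_real_interval)
  have "compact (f' ` C)"
    using compact_continuous_image[OF continuous_on_subset[OF c] cc(1)] by simp
  then have "bounded (f' ` C)" by (rule compact_imp_bounded)
  then obtain B where B0: "\<forall>y\<in>f' ` C. norm y \<le> B" unfolding bounded_iff by blast
  have B: "\<And>x. x \<in> C \<Longrightarrow> norm (f' x) \<le> B" using B0 by blast
  have main: "\<bar>f (t1, \<theta>) - f (t2, \<theta>)\<bar> \<le> B * \<bar>t1 - t2\<bar>"
    if "t1 \<in> {0..T}" "t2 \<in> {0..T}" "\<theta> \<in> \<Theta>" for t1 t2 \<theta>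
  proof -
    have "norm (f (t1, \<theta>) - f (t2, \<theta>)) \<le> B * norm ((t1, \<theta>) - (t2, \<theta>))"
    proof (rule differentiable_bound[OF cc(2), where f' = "\<lambda>x. blinfun_apply (f' x)"])
      show "\<And>x. x \<in> C \<Longrightarrow> (f has_derivative blinfun_apply (f' x)) (at x within C)"
        using d has_derivative_at_withinI by blast
      show "\<And>x. x \<in> C \<Longrightarrow> onorm (blinfun_apply (f' x)) \<le> B"
        using B by (metis norm_blinfun.rep_eq)
      show "(t1, \<theta>) \<in> C" "(t2, \<theta>) \<in> C" using that R unfolding C_def by blast+
    qed
    then show ?thesis by (simp add: norm_Pair)
  qed
  have "\<bar>f (t1, \<theta>) - f (t2, \<theta>)\<bar> \<le> max B 0 * \<bar>t1 - t2\<bar>"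
    if "t1 \<in> {0..T}" "t2 \<in> {0..T}" "\<theta> \<in> \<Theta>" for t1 t2 \<theta>
  proof -
    have "B * \<bar>t1 - t2\<bar> \<le> max B 0 * \<bar>t1 - t2\<bar>"
      by (intro mult_right_mono) auto
    then show ?thesis using main[OF that] by linarith
  qed
  then show ?thesis by (intro exI[of _ "max B 0"]) auto
qed

theorem lemma1:
  fixes body :: "'i \<Rightarrow> real \<Rightarrow> real^'n \<Rightarrow> (real^3) set"
    and part :: "'i \<Rightarrow> 'j \<Rightarrow> real \<Rightarrow> real^'n \<Rightarrow> (real^3) set"
    and obs :: "(real^3) set"
    and obspart :: "'k \<Rightarrow> (real^3) set"
    and I :: "'i set" and J :: "'i \<Rightarrow> 'j set" and K :: "'k set"
    and T :: real and \<Theta> :: "(real^'n) set"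
  assumes finI: "finite I"
    and finJ: "\<And>i. i \<in> I \<Longrightarrow> finite (J i)"
    and finK: "finite K"
    and body_decomp: "\<And>i t \<theta>. i \<in> I \<Longrightarrow> body i t \<theta> = (\<Union>j\<in>J i. part i j t \<theta>)"
    and obs_decomp: "obs = (\<Union>k\<in>K. obspart k)"
    and smooth: "\<And>i j k. i \<in> I \<Longrightarrow> j \<in> J i \<Longrightarrow> k \<in> K \<Longrightarrow>
        C1_on UNIV (\<lambda>(t, \<theta>). setdist (part i j t \<theta>) (obspart k))"
    and bounded_dom: "bounded \<Theta>"
  shows "\<exists>L1. \<forall>i\<in>I. \<forall>j\<in>J i. \<forall>k\<in>K. \<forall>t1\<in>{0..T}. \<forall>t2\<in>{0..T}. \<forall>\<theta>\<in>\<Theta>.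
           \<bar>setdist (part i j t1 \<theta>) (obspart k) - setdist (part i j t2 \<theta>) (obspart k)\<bar>
             \<le> L1 * \<bar>t1 - t2\<bar>"
proof -
  have mono: "\<And>L L' (x::real) (y::real). x \<le> L * \<bar>y\<bar> \<Longrightarrow> L \<le> L' \<Longrightarrow> x \<le> L' * \<bar>y\<bar>"
    by (meson abs_ge_zero mult_right_mono order_trans)
  have "\<exists>L\<ge>0. \<forall>i\<in>I. \<forall>j\<in>J i. \<forall>k\<in>K. \<forall>t1\<in>{0..T}. \<forall>t2\<in>{0..T}. \<forall>\<theta>\<in>\<Theta>.
           \<bar>setdist (part i j t1 \<theta>) (obspart k) - setdist (part i j t2 \<theta>) (obspart k)\<bar>
             \<le> L * \<bar>t1 - t2\<bar>"
  proof (rule finite_bound_ex[OF finI])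
    show "\<forall>i\<in>I. \<exists>L\<ge>0. \<forall>j\<in>J i. \<forall>k\<in>K. \<forall>t1\<in>{0..T}. \<forall>t2\<in>{0..T}. \<forall>\<theta>\<in>\<Theta>.
           \<bar>setdist (part i j t1 \<theta>) (obspart k) - setdist (part i j t2 \<theta>) (obspart k)\<bar>
             \<le> L * \<bar>t1 - t2\<bar>"
    proof
      fix i assume i: "i \<in> I"
      show "\<exists>L\<ge>0. \<forall>j\<in>J i. \<forall>k\<in>K. \<forall>t1\<in>{0..T}. \<forall>t2\<in>{0..T}. \<forall>\<theta>\<in>\<Theta>.
           \<bar>setdist (part i j t1 \<theta>) (obspart k) - setdist (part i j t2 \<theta>) (obspart k)\<bar>
             \<le> L * \<bar>t1 - t2\<bar>"
      proof (rule finite_bound_ex[OF finJ[OF i]])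
        show "\<forall>j\<in>J i. \<exists>L\<ge>0. \<forall>k\<in>K. \<forall>t1\<in>{0..T}. \<forall>t2\<in>{0..T}. \<forall>\<theta>\<in>\<Theta>.
           \<bar>setdist (part i j t1 \<theta>) (obspart k) - setdist (part i j t2 \<theta>) (obspart k)\<bar>
             \<le> L * \<bar>t1 - t2\<bar>"
        proof
          fix j assume j: "j \<in> J i"
          show "\<exists>L\<ge>0. \<forall>k\<in>K. \<forall>t1\<in>{0..T}. \<forall>t2\<in>{0..T}. \<forall>\<theta>\<in>\<Theta>.
           \<bar>setdist (part i j t1 \<theta>) (obspart k) - setdist (part i j t2 \<theta>) (obspart k)\<bar>
             \<le> L * \<bar>t1 - t2\<bar>"
          proof (rule finite_bound_ex[OF finK])
            show "\<forall>k\<in>K. \<exists>L\<ge>0. \<forall>t1\<in>{0..T}. \<forall>t2\<in>{0..T}. \<forall>\<theta>\<in>\<Theta>.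
              \<bar>setdist (part i j t1 \<theta>) (obspart k) - setdist (part i j t2 \<theta>) (obspart k)\<bar>
             \<le> L * \<bar>t1 - t2\<bar>"
            proof
              fix k assume k: "k \<in> K"
              from single_bound[OF smooth[OF i j k] bounded_dom, of T]
              show "\<exists>L\<ge>0. \<forall>t1\<in>{0..T}. \<forall>t2\<in>{0..T}. \<forall>\<theta>\<in>\<Theta>.
              \<bar>setdist (part i j t1 \<theta>) (obspart k) - setdist (part i j t2 \<theta>) (obspart k)\<bar>
             \<le> L * \<bar>t1 - t2\<bar>" by simp
            qed
          qed (meson mono)
        qed
      qed (meson mono)
    qed
  qed (meson mono)
  then show ?thesis by blast
qed

end
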